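(* Assume that there exists a generalized Sierpinski set. Then there exists a nonprincipal filter on $\omega$ which is meager but not Lebesgue measurable (as a subset of $2^\omega$).
   Context: For a regular uncountable cardinal $\kappa$, a set $S\subseteq 2^\omega$ of size $\kappa$ is a generalized Sierpinski set (of size $\kappa$) if $|S\cap H|<\kappa$ for every measure zero set $H\subseteq 2^\omega$. A filter on $\omega$ is identified with the set of characteristic functions of its elements, a subset of $2^\omega$, which carries the product topology and the standard product (Lebesgue) measure. *)

theory Defs
  imports "HOL-Analysis.Analysis" "HOL-Probability.Probability"
begin

definition cantor_top :: "(nat \<Rightarrow> bool) topology" where
  "cantor_top = product_topology (\<lambda>_. discrete_topology (UNIV :: bool set)) UNIV"

text \<open>Standard product (fair coin) measure on 2^omega and its completion (Lebesgue measure).\<close>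
definition cantor_measure :: "(nat \<Rightarrow> bool) measure" where
  "cantor_measure = PiM UNIV (\<lambda>_. measure_pmf (bernoulli_pmf (1/2)))"

definition lebesgue_measurable_cantor :: "(nat \<Rightarrow> bool) set \<Rightarrow> bool" where
  "lebesgue_measurable_cantor A \<longleftrightarrow> A \<in> sets (completion cantor_measure)"

definition measure_zero_cantor :: "(nat \<Rightarrow> bool) set \<Rightarrow> bool" where
  "measure_zero_cantor H \<longleftrightarrow> H \<in> null_sets (completion cantor_measure)"

definition nowhere_dense_in :: "'a topology \<Rightarrow> 'a set \<Rightarrow> bool" where
  "nowhere_dense_in X A \<longleftrightarrow> A \<subseteq> topspace X \<and> X interior_of (X closure_of A) = {}"

definition meager_in :: "'a topology \<Rightarrow> 'a set \<Rightarrow> bool" where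
  "meager_in X A \<longleftrightarrow> (\<exists>\<F>. countable \<F> \<and> (\<forall>N\<in>\<F>. nowhere_dense_in X N) \<and> A \<subseteq> \<Union>\<F>)"

definition generalized_Sierpinski_set :: "(nat \<Rightarrow> bool) set \<Rightarrow> bool" where
  "generalized_Sierpinski_set S \<longleftrightarrow>
     uncountable S \<and> regularCard (card_of S) \<and>
     (\<forall>H. measure_zero_cantor H \<longrightarrow> (card_of (S \<inter> H), card_of S) \<in> ordLess)"

definition filter_on_nat :: "nat set set \<Rightarrow> bool" where
  "filter_on_nat F \<longleftrightarrow> UNIV \<in> F \<and> {} \<notin> F \<and>
     (\<forall>A B. A \<in> F \<longrightarrow> A \<subseteq> B \<longrightarrow> B \<in> F) \<and>
     (\<forall>A B. A \<in> F \<longrightarrow> B \<in> F \<longrightarrow> A \<inter> B \<in> F)"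

definition principal_filter_on_nat :: "nat set set \<Rightarrow> bool" where
  "principal_filter_on_nat F \<longleftrightarrow> (\<exists>A. F = {B. A \<subseteq> B})"

text \<open>A filter identified with the set of characteristic functions of its elements.\<close>
definition char_set :: "nat set set \<Rightarrow> (nat \<Rightarrow> bool) set" where
  "char_set F = (\<lambda>A n. n \<in> A) ` F"

end

theory Submission
  imports Defs "HOL-Library.Countable_Set_Type"
begin

unbundle cardinal_syntax


abbreviation BM :: "bool measure" where "BM \<equiv> measure_pmf (bernoulli_pmf (1/2))"
abbreviation P where "P \<equiv> cantor_measure"

lemma P_def': "P = PiM UNIV (\<lambda>_. BM)" by (simp add: cantor_measure_def)

lemma prob_P: "prob_space P"
  unfolding cantor_measure_def by (intro prob_space_PiM prob_space_measure_pmf)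

lemma space_P[simp]: "space P = UNIV"
  unfolding cantor_measure_def by (simp add: space_PiM)

lemma sets_BM[simp]: "sets BM = UNIV" by simp

lemma coord_meas[measurable]: "(\<lambda>x. x i) \<in> measurable P BM"
  unfolding cantor_measure_def by measurable

lemma coord_meas'[measurable]: "(\<lambda>x. x i) \<in> measurable P (count_space UNIV)"
  using coord_meas by simp

lemma coordmap_meas: "(\<lambda>x i. g i (x i)) \<in> measurable P P"
  unfolding P_def'
  by (rule measurable_PiM_single') (auto simp: space_PiM intro!: measurable_compose[OF _ measurable_count_space, of "\<lambda>x. x _"] coord_meas'[unfolded P_def'])

lemma coordmap_meas2: "(\<lambda>x. g (x i)) \<in> measurable P (count_space UNIV)"
  by (rule measurable_compose[OF coord_meas' measurable_count_space])

lemma indep_coord: "prob_space.indep_vars P (\<lambda>_. BM) (\<lambda>i x. x i) UNIV"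
proof -
  interpret prob_space P by (rule prob_P)
  have "distr P (PiM UNIV (\<lambda>_. BM)) (\<lambda>x. \<lambda>i\<in>UNIV. x i) = PiM UNIV (\<lambda>i. distr P BM (\<lambda>x. x i))"
  proof -
    have "(\<lambda>x. \<lambda>i\<in>UNIV. x i) = (\<lambda>x::nat\<Rightarrow>bool. x)" by (auto simp: restrict_def)
    then have "distr P (PiM UNIV (\<lambda>_. BM)) (\<lambda>x. \<lambda>i\<in>UNIV. x i) = distr P P (\<lambda>x. x)"
      by (simp add: P_def')
    also have "\<dots> = P" by (rule distr_id)
    also have "\<dots> = PiM UNIV (\<lambda>i. distr P BM (\<lambda>x. x i))"
      unfolding P_def' by (subst distr_PiM_component) (auto intro: prob_space_measure_pmf)
    finally show ?thesis .
  qed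
  then show ?thesis
    by (subst indep_vars_iff_distr_eq_PiM) (auto simp: coord_meas')
qed

lemma emeasure_BM: "emeasure BM A = ennreal (indicator A True) / 2 + ennreal (indicator A False) / 2"
proof -
  have "emeasure BM A = (\<integral>\<^sup>+x. indicator A x \<partial>BM)" by simp
  also have "\<dots> = indicator A True * ennreal (1/2) + indicator A False * ennreal (1 - 1/2)"
    by (subst nn_integral_bernoulli_pmf) auto
  finally show ?thesis
    by (simp add: indicator_def ennreal_divide_numeral divide_ennreal)
qed

lemma distr_BM_swap:
  assumes "g = id \<or> g = Not"
  shows "distr BM BM g = BM"
proof (rule measure_eqI)
  fix A :: "bool set" assume "A \<in> sets (distr BM BM g)"
  have "emeasure (distr BM BM g) A = emeasure BM (g -` A)"
    by (subst emeasure_distr) auto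
  also have "\<dots> = emeasure BM A"
    using assms by (auto simp: emeasure_BM indicator_def add.commute)
  finally show "emeasure (distr BM BM g) A = emeasure BM A" .
qed simp

lemma distr_coordmap:
  assumes "\<And>i. g i = id \<or> g i = Not"
  shows "distr P P (\<lambda>x i. g i (x i)) = P"
proof -
  interpret prob_space P by (rule prob_P)
  have ind: "indep_vars (\<lambda>_. BM) (\<lambda>i x. g i (x i)) UNIV"
    by (rule indep_vars_compose2[OF indep_coord]) simp
  have "distr P (PiM UNIV (\<lambda>_. BM)) (\<lambda>x. \<lambda>i\<in>UNIV. g i (x i)) = PiM UNIV (\<lambda>i. distr P BM (\<lambda>x. g i (x i)))"
    using ind by (subst (asm) indep_vars_iff_distr_eq_PiM) (auto simp: coordmap_meas2)
  moreover have "(\<lambda>x. \<lambda>i\<in>UNIV. g i (x i)) = (\<lambda>x i. g i (x i))" by (auto simp: restrict_def)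
  moreover have "distr P BM (\<lambda>x. g i (x i)) = BM" for i
  proof -
    have "distr P BM (\<lambda>x. g i (x i)) = distr (distr P BM (\<lambda>x. x i)) BM (g i)"
      by (subst distr_distr) (auto simp: comp_def)
    also have "distr P BM (\<lambda>x. x i) = BM"
      unfolding P_def' by (subst distr_PiM_component) (auto intro: prob_space_measure_pmf)
    finally show ?thesis using distr_BM_swap assms by simp
  qed
  ultimately show ?thesis by (simp add: P_def')
qed

lemma emeasure_coordmap:
  assumes "\<And>i. g i = id \<or> g i = Not" "A \<in> sets P"
  shows "emeasure P ((\<lambda>x i. g i (x i)) -` A) = emeasure P A"
proof -
  have m: "(\<lambda>x i. g i (x i)) \<in> measurable P P"
    by (rule coordmap_meas)
  have "emeasure P A = emeasure (distr P P (\<lambda>x i. g i (x i))) A"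
    using distr_coordmap[OF assms(1)] by simp
  also have "\<dots> = emeasure P ((\<lambda>x i. g i (x i)) -` A)"
    using m assms(2) by (subst emeasure_distr) auto
  finally show ?thesis by simp
qed

lemma prod_pow_card:
  fixes d :: real
  assumes "finite A"
  shows "d ^ card (A \<inter> Collect x) = (\<Prod>i\<in>A. if x i then d else 1)"
  using assms
proof (induction A rule: finite_induct)
  case (insert a A)
  then show ?case
    by (cases "x a") (auto simp: Int_insert_left card_insert_if)
qed simp

lemma exp_count:
  fixes d :: real
  assumes A: "finite A" and d: "0 \<le> d" "d \<le> 1"
  shows "(\<integral>\<^sup>+x. ennreal (d ^ card (A \<inter> Collect x)) \<partial>P) = ennreal (((1+d)/2) ^ card A)"
proof -
  interpret prob_space P by (rule prob_P)
  have ind: "indep_vars (\<lambda>_. borel) (\<lambda>i x. ennreal (if x i then d else 1)) A"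
    by (rule indep_vars_subset[OF indep_vars_compose2[OF indep_coord]]) auto
  have "(\<integral>\<^sup>+x. ennreal (d ^ card (A \<inter> Collect x)) \<partial>P)
      = (\<integral>\<^sup>+x. (\<Prod>i\<in>A. ennreal (if x i then d else 1)) \<partial>P)"
    using d A by (intro nn_integral_cong) (simp add: prod_pow_card prod_ennreal)
  also have "\<dots> = (\<Prod>i\<in>A. \<integral>\<^sup>+x. ennreal (if x i then d else 1) \<partial>P)"
    by (rule indep_vars_nn_integral[OF A ind]) simp
  also have "\<dots> = (\<Prod>i\<in>A. ennreal ((1+d)/2))"
  proof (rule prod.cong[OF refl])
    fix i
    have "(\<integral>\<^sup>+x. ennreal (if x i then d else 1) \<partial>P) = (\<integral>\<^sup>+b. ennreal (if b then d else 1) \<partial>distr P BM (\<lambda>x. x i))"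
      by (subst nn_integral_distr) (auto simp: coord_meas')
    also have "distr P BM (\<lambda>x. x i) = BM"
      unfolding P_def' by (subst distr_PiM_component) (auto intro: prob_space_measure_pmf)
    also have "(\<integral>\<^sup>+b. ennreal (if b then d else 1) \<partial>BM) = ennreal d * ennreal (1/2) + 1 * ennreal (1 - 1/2)"
      by (subst nn_integral_bernoulli_pmf) (auto simp: d)
    also have "\<dots> = ennreal (d * (1/2) + (1 - 1/2))"
    proof -
      have e1: "ennreal (d*(1/2) + (1-1/2)) = ennreal (d*(1/2)) + ennreal (1-1/2)"
        by (rule ennreal_plus) (use d in auto)
      have e2: "ennreal (d*(1/2)) = ennreal d * ennreal (1/2)"
        by (rule ennreal_mult) (use d in auto)
      show ?thesis by (simp only: e1 e2 mult_1)
    qed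
    also have "d * (1/2) + (1 - 1/2) = (1+d)/(2::real)" by (simp add: field_simps)
    finally show "(\<integral>\<^sup>+x. ennreal (if x i then d else 1) \<partial>P) = ennreal ((1+d)/2)" .
  qed
  also have "\<dots> = ennreal (((1+d)/2) ^ card A)"
    using d by (simp add: prod_ennreal[symmetric] ennreal_power)
  finally show ?thesis .
qed



definition Iv :: "nat \<Rightarrow> nat set" where "Iv n = {2^n..<2^Suc n}"
definition cc :: "nat \<Rightarrow> real" where "cc j = 1 - 1/2^j"
definition Good :: "nat set \<Rightarrow> bool" where
  "Good w \<longleftrightarrow> (\<forall>j. summable (\<lambda>n. cc j ^ card (w \<inter> Iv n)))"

lemma finite_Iv[simp]: "finite (Iv n)" by (simp add: Iv_def)
lemma card_Iv: "card (Iv n) = 2^n" by (simp add: Iv_def)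
lemma Iv_ge: "i \<in> Iv n \<Longrightarrow> n < i"
  by (auto simp: Iv_def intro: less_le_trans[OF less_exp])

lemma cc_nonneg: "0 \<le> cc j" by (simp add: cc_def)
lemma cc_le1: "cc j \<le> 1" by (simp add: cc_def)
lemma cc_less1: "cc j < 1" by (simp add: cc_def)
lemma cc_Suc: "(1 + cc j)/2 = cc (Suc j)" by (simp add: cc_def field_simps)

lemma Good_UNIV: "Good UNIV"
  unfolding Good_def
proof
  fix j
  have "summable (\<lambda>n. cc j ^ n)"
    using cc_nonneg cc_less1 by (intro summable_geometric) auto
  moreover have "norm (cc j ^ card (UNIV \<inter> Iv n)) \<le> cc j ^ n" for n
  proof -
    have "n \<le> 2^n" by (simp add: less_imp_le)
    then have "cc j ^ (2^n) \<le> cc j ^ n"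
      using cc_nonneg cc_le1 by (intro power_decreasing) auto
    then show ?thesis using cc_nonneg by (simp add: card_Iv)
  qed
  ultimately show "summable (\<lambda>n. cc j ^ card (UNIV \<inter> Iv n))"
    by (rule summable_comparison_test'[where N=0])
qed

lemma Good_eventually:
  assumes "Good w"
  shows "eventually (\<lambda>n. w \<inter> Iv n \<noteq> {}) sequentially"
proof -
  have "summable (\<lambda>n. cc 0 ^ card (w \<inter> Iv n))" using assms by (simp add: Good_def)
  then have "(\<lambda>n. cc 0 ^ card (w \<inter> Iv n)) \<longlonglongrightarrow> 0" by (rule summable_LIMSEQ_zero)
  then have "eventually (\<lambda>n. cc 0 ^ card (w \<inter> Iv n) < 1) sequentially"
    by (rule order_tendstoD) simp
  then show ?thesis
    by eventually_elim (auto simp: cc_def)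
qed

lemma meas_count:
  assumes "finite A"
  shows "(\<lambda>x. ennreal (d ^ card (A \<inter> Collect x))) \<in> borel_measurable P"
proof -
  have "(\<lambda>x. ennreal (\<Prod>i\<in>A. if x i then d else 1)) \<in> borel_measurable P"
    by measurable
  then show ?thesis using assms by (simp add: prod_pow_card)
qed

lemma good_step:
  assumes "Good w"
  shows "AE x in P. Good (w \<inter> Collect x)"
proof -
  interpret prob_space P by (rule prob_P)
  have "AE x in P. summable (\<lambda>n. cc j ^ card (w \<inter> Collect x \<inter> Iv n))" for j
  proof -
    let ?f = "\<lambda>n x. ennreal (cc j ^ card ((w \<inter> Iv n) \<inter> Collect x))"
    have fin: "finite (w \<inter> Iv n)" for n by simp
    have meas: "?f n \<in> borel_measurable P" for n by (rule meas_count[OF fin])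
    have "(\<integral>\<^sup>+x. (\<Sum>n. ?f n x) \<partial>P) = (\<Sum>n. \<integral>\<^sup>+x. ?f n x \<partial>P)"
      by (rule nn_integral_suminf) (rule meas)
    also have "\<dots> = (\<Sum>n. ennreal (cc (Suc j) ^ card (w \<inter> Iv n)))"
      by (simp add: exp_count[OF fin cc_nonneg cc_le1] cc_Suc)
    also have "\<dots> = ennreal (\<Sum>n. cc (Suc j) ^ card (w \<inter> Iv n))"
      using assms cc_nonneg by (intro suminf_ennreal2) (auto simp: Good_def)
    finally have "(\<integral>\<^sup>+x. (\<Sum>n. ?f n x) \<partial>P) \<noteq> \<infinity>" by simp
    then have "AE x in P. (\<Sum>n. ?f n x) \<noteq> \<infinity>"
      by (intro nn_integral_PInf_AE) (auto intro: meas)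
    then show ?thesis
    proof (rule eventually_mono)
      fix x assume "(\<Sum>n. ?f n x) \<noteq> \<infinity>"
      then have "summable (\<lambda>n. cc j ^ card ((w \<inter> Iv n) \<inter> Collect x))"
        using cc_nonneg by (intro summable_suminf_not_top) auto
      moreover have "(w \<inter> Iv n) \<inter> Collect x = w \<inter> Collect x \<inter> Iv n" for n by auto
      ultimately show "summable (\<lambda>n. cc j ^ card (w \<inter> Collect x \<inter> Iv n))" by simp
    qed
  qed
  then have "AE x in P. \<forall>j. summable (\<lambda>n. cc j ^ card (w \<inter> Collect x \<inter> Iv n))"
    by (simp add: AE_all_countable)
  then show ?thesis by (simp add: Good_def)
qed



definition flipE :: "nat set \<Rightarrow> (nat \<Rightarrow> bool) \<Rightarrow> (nat \<Rightarrow> bool)" where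
  "flipE E = (\<lambda>x i. (if i \<in> E then Not else id) (x i))"
definition neg :: "(nat \<Rightarrow> bool) \<Rightarrow> (nat \<Rightarrow> bool)" where
  "neg = (\<lambda>x i. Not (x i))"

lemma flipE_meas: "flipE E \<in> measurable P P"
  unfolding flipE_def by (rule coordmap_meas)
lemma neg_meas: "neg \<in> measurable P P"
  unfolding neg_def by (rule coordmap_meas)
lemma emeasure_flipE: "A \<in> sets P \<Longrightarrow> emeasure P (flipE E -` A) = emeasure P A"
  unfolding flipE_def by (rule emeasure_coordmap) auto
lemma emeasure_neg: "A \<in> sets P \<Longrightarrow> emeasure P (neg -` A) = emeasure P A"
  unfolding neg_def by (rule emeasure_coordmap) auto

lemma flipE_flipE: "flipE a (flipE b x) = flipE ((a - b) \<union> (b - a)) x"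
  by (auto simp: flipE_def fun_eq_iff)
lemma flipE_self[simp]: "flipE a (flipE a x) = x"
  by (auto simp: flipE_def fun_eq_iff)
lemma flipE_empty[simp]: "flipE {} x = x"
  by (auto simp: flipE_def fun_eq_iff)

lemma zero_one:
  assumes B: "B \<in> sets P" and inv: "\<And>x E. finite E \<Longrightarrow> x \<in> B \<Longrightarrow> flipE E x \<in> B"
  shows "measure P B = 0 \<or> measure P B = 1"
proof -
  interpret prob_space P by (rule prob_P)
  define Ac where "Ac n = sigma_sets (space P) {(\<lambda>x. x n) -` A \<inter> space P | A. A \<in> sets BM}" for n
  have ind: "indep_sets Ac UNIV"
    using indep_coord unfolding indep_vars_def Ac_def by simp
  have sa: "sigma_algebra (space P) (Ac n)" for n
    unfolding Ac_def by (rule sigma_algebra_sigma_sets) auto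
  have tail: "B \<in> tail_events Ac"
    unfolding tail_events_def
  proof
    fix n :: nat
    define G where "G = \<Union>(Ac ` {n..})"
    have Gsub: "G \<subseteq> Pow (space P)"
      by simp
    define N where "N = sigma (space P) G"
    have sN: "sets N = sigma_sets (space P) G" unfolding N_def using Gsub by (rule sets_measure_of)
    have spN: "space N = UNIV" unfolding N_def using Gsub by (simp add: space_measure_of)
    define r where "r x = (\<lambda>i. if i < n then False else x i)" for x :: "nat \<Rightarrow> bool"
    have rm: "r \<in> measurable N P"
      unfolding P_def' r_def
    proof (rule measurable_PiM_single')
      fix i :: nat
      show "(\<lambda>x. if i < n then False else x i) \<in> measurable N BM"
      proof (cases "i < n")
        case False
        have "(\<lambda>x. x i) \<in> measurable N (count_space UNIV)"
        proof (rule measurableI)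
          fix A :: "bool set"
          have "(\<lambda>x. x i) -` A \<inter> space P \<in> Ac i" unfolding Ac_def by (intro sigma_sets.Basic) auto
          then have "(\<lambda>x. x i) -` A \<inter> space P \<in> G" using False unfolding G_def by auto
          then show "(\<lambda>x. x i) -` A \<inter> space N \<in> sets N"
            unfolding sN using spN by (auto intro: sigma_sets.Basic)
        qed auto
        then show ?thesis using False by simp
      qed simp
    qed (auto simp: spN space_PiM)
    have "r -` B \<inter> space N \<in> sets N" using measurable_sets[OF rm B] .
    moreover have "r -` B \<inter> space N = B"
    proof -
      have fin: "finite {i. i < n \<and> x i}" for x by simp
      have e1: "r x = flipE {i. i < n \<and> x i} x" for x by (auto simp: r_def flipE_def fun_eq_iff)
      have e2: "x = flipE {i. i < n \<and> x i} (r x)" for x by (auto simp: r_def flipE_def fun_eq_iff)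
      show ?thesis
      proof (intro set_eqI iffI)
        fix x assume "x \<in> r -` B \<inter> space N"
        then have "r x \<in> B" by simp
        then have "flipE {i. i < n \<and> x i} (r x) \<in> B" using inv[OF fin] by blast
        then show "x \<in> B" using e2[of x] by simp
      next
        fix x assume "x \<in> B"
        then have "flipE {i. i < n \<and> x i} x \<in> B" using inv[OF fin] by blast
        then show "x \<in> r -` B \<inter> space N" using e1[of x] spN by simp
      qed
    qed
    ultimately show "B \<in> sigma_sets (space P) (\<Union>(Ac ` {n..}))" using sN G_def by simp
  qed
  show ?thesis by (rule kolmogorov_0_1_law[OF sa ind tail])
qed

lemma null_invariant:
  assumes A: "A \<in> sets (completion P)"
    and inv: "\<And>x E. finite E \<Longrightarrow> x \<in> A \<Longrightarrow> flipE E x \<in> A"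
    and dis: "\<And>x. x \<in> A \<Longrightarrow> neg x \<notin> A"
  shows "A \<in> null_sets (completion P)"
proof -
  interpret prob_space P by (rule prob_P)
  define B0 where "B0 = main_part P A"
  have B0s: "B0 \<in> sets P" using A unfolding B0_def by simp
  have B0A: "B0 \<subseteq> A" using main_part_null_part_Un[OF A] unfolding B0_def by blast
  have eA: "emeasure (completion P) A = emeasure P B0" using A unfolding B0_def by simp
  define Bi where "Bi = (\<Union>E\<in>{E. finite E}. flipE E -` B0)"
  have Bis: "Bi \<in> sets P"
    unfolding Bi_def
  proof (rule sets.countable_UN')
    show "countable {E :: nat set. finite E}" by (rule countable_Collect_finite)
    show "(\<lambda>E. flipE E -` B0) ` {E. finite E} \<subseteq> sets P"
      using measurable_sets[OF flipE_meas B0s] by auto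
  qed
  have BiA: "Bi \<subseteq> A"
  proof
    fix x assume "x \<in> Bi"
    then obtain E where "finite E" "flipE E x \<in> B0" unfolding Bi_def by auto
    then have "flipE E (flipE E x) \<in> A" using inv B0A by blast
    then show "x \<in> A" by simp
  qed
  have B0Bi: "B0 \<subseteq> Bi" unfolding Bi_def by force
  have Biinv: "flipE E x \<in> Bi" if "finite E" "x \<in> Bi" for x E
  proof -
    from that obtain E' where E': "finite E'" "flipE E' x \<in> B0" unfolding Bi_def by auto
    have "flipE ((E' - E) \<union> (E - E')) (flipE E x) = flipE E' x"
      by (auto simp: flipE_def fun_eq_iff)
    then have "flipE E x \<in> flipE ((E' - E) \<union> (E - E')) -` B0" using E' by simp
    moreover have "(E' - E) \<union> (E - E') \<in> {E. finite E}" using E' that by auto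
    ultimately show ?thesis unfolding Bi_def by blast
  qed
  have "emeasure P Bi \<le> emeasure P B0"
  proof -
    have "emeasure P Bi = emeasure (completion P) Bi" using Bis by simp
    also have "\<dots> \<le> emeasure (completion P) A" using Bis A BiA by (intro emeasure_mono) auto
    finally show ?thesis using eA by simp
  qed
  moreover have "emeasure P B0 \<le> emeasure P Bi" using B0Bi Bis by (rule emeasure_mono)
  ultimately have eq: "measure P B0 = measure P Bi" by (simp add: emeasure_eq_measure)
  have negs: "neg -` Bi \<in> sets P" using measurable_sets[OF neg_meas Bis] by simp
  have disj: "neg -` Bi \<inter> Bi = {}"
  proof -
    { fix x assume "neg x \<in> Bi" "x \<in> Bi"
      then have "neg x \<in> A" "x \<in> A" using BiA by auto
      then have False using dis by blast }
    then show ?thesis by auto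
  qed
  have "measure P (neg -` Bi) = measure P Bi"
    using emeasure_neg[OF Bis] by (simp add: emeasure_eq_measure)
  moreover have "measure P (neg -` Bi \<union> Bi) = measure P (neg -` Bi) + measure P Bi"
    using disj negs Bis by (intro finite_measure_Union) auto
  moreover have "measure P (neg -` Bi \<union> Bi) \<le> 1" by (rule prob_le_1)
  ultimately have "measure P Bi \<le> 1/2" by simp
  moreover have "measure P Bi = 0 \<or> measure P Bi = 1"
    using Bis by (rule zero_one) (rule Biinv)
  ultimately have "measure P Bi = 0" by auto
  then have "emeasure P B0 = 0" using eq by (simp add: emeasure_eq_measure)
  then show ?thesis using A eA by (simp add: null_sets_def)
qed



definition Mc :: "nat \<Rightarrow> (nat \<Rightarrow> bool) set" where
  "Mc m = {z. \<forall>n\<ge>m. \<exists>i\<in>Iv n. z i}"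

lemma topspace_cantor[simp]: "topspace cantor_top = UNIV"
  by (simp add: cantor_top_def PiE_UNIV_domain)

lemma closed_coord: "closedin cantor_top {z. z i}"
proof -
  have "closedin cantor_top {z \<in> topspace cantor_top. z i \<in> {True}}"
    unfolding cantor_top_def
    by (rule closedin_continuous_map_preimage[OF continuous_map_product_projection]) auto
  then show ?thesis by simp
qed

lemma closed_Mc: "closedin cantor_top (Mc m)"
proof -
  have "Mc m = \<Inter>((\<lambda>n. \<Union>((\<lambda>i. {z. z i}) ` Iv n)) ` {m..})"
    by (auto simp: Mc_def)
  also have "closedin cantor_top \<dots>"
  proof (rule closedin_Inter)
    have "closedin cantor_top (\<Union>i\<in>Iv n. {z. z i})" for n
      by (rule closedin_Union) (auto simp: closed_coord)
    then show "\<And>S. S \<in> (\<lambda>n. \<Union>i\<in>Iv n. {z. z i}) ` {m..} \<Longrightarrow> closedin cantor_top S" by auto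
  qed auto
  finally show ?thesis .
qed

lemma nowhere_dense_Mc: "nowhere_dense_in cantor_top (Mc m)"
  unfolding nowhere_dense_in_def
proof (intro conjI)
  show "Mc m \<subseteq> topspace cantor_top" by simp
  have "cantor_top interior_of (Mc m) = {}"
    unfolding interior_of_eq_empty
  proof (intro allI impI)
    fix T assume T: "openin cantor_top T \<and> T \<subseteq> Mc m"
    show "T = {}"
    proof (rule ccontr)
      assume "T \<noteq> {}"
      then obtain x where x: "x \<in> T" by auto
      from T x obtain U where U: "finite {i. U i \<noteq> UNIV}" "x \<in> Pi\<^sub>E UNIV U" "Pi\<^sub>E UNIV U \<subseteq> T"
        unfolding cantor_top_def openin_product_topology_alt by auto
      define J where "J = {i. U i \<noteq> UNIV}"
      define y where "y i = (if i \<in> J then x i else False)" for i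
      have "y \<in> Pi\<^sub>E UNIV U" using U(2) by (auto simp: y_def J_def)
      then have "y \<in> Mc m" using U(3) T by auto
      define n where "n = max m (Suc (Max (insert 0 J)))"
      have "m \<le> n" by (simp add: n_def)
      then obtain i where i: "i \<in> Iv n" "y i" using \<open>y \<in> Mc m\<close> unfolding Mc_def by blast
      have "n < i" using Iv_ge[OF i(1)] .
      then have "i \<notin> J" using U(1) unfolding J_def n_def
        by (metis (no_types, lifting) J_def Max_ge finite_insert insertCI le_imp_less_Suc max.strict_boundedE not_less_iff_gr_or_eq)
      then show False using i(2) by (simp add: y_def)
    qed
  qed
  then show "cantor_top interior_of (cantor_top closure_of Mc m) = {}"
    by (simp add: closure_of_closedin[OF closed_Mc])
qed

lemma meager_sub:
  assumes "\<And>z. z \<in> A \<Longrightarrow> eventually (\<lambda>n. \<exists>i\<in>Iv n. z i) sequentially"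
  shows "meager_in cantor_top A"
  unfolding meager_in_def
proof (intro exI conjI)
  show "countable (range Mc)" by simp
  show "\<forall>N\<in>range Mc. nowhere_dense_in cantor_top N" using nowhere_dense_Mc by auto
  show "A \<subseteq> \<Union>(range Mc)"
  proof
    fix z assume "z \<in> A"
    then obtain m where "\<forall>n\<ge>m. \<exists>i\<in>Iv n. z i" using assms unfolding eventually_sequentially by blast
    then show "z \<in> \<Union>(range Mc)" by (auto simp: Mc_def)
  qed
qed





definition linked :: "(nat \<Rightarrow> bool) set \<Rightarrow> (nat \<Rightarrow> bool) set \<Rightarrow> bool" where
  "linked S X \<longleftrightarrow> X \<subseteq> S \<and> (\<forall>T. T \<subseteq> X \<and> finite T \<longrightarrow> Good (\<Inter>x\<in>T. Collect x))"

lemma exists_maximal_linked: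
  "\<exists>X. linked S X \<and> (\<forall>Y. linked S Y \<and> X \<subseteq> Y \<longrightarrow> Y = X)"
proof -
  have "\<forall>C\<in>chains {X. linked S X}. \<exists>U\<in>{X. linked S X}. \<forall>X\<in>C. X \<subseteq> U"
  proof
    fix C assume C: "C \<in> chains {X. linked S X}"
    have "linked S (\<Union>C)"
      unfolding linked_def
    proof (intro conjI allI impI)
      show "\<Union>C \<subseteq> S" using C by (auto simp: chains_def linked_def)
      fix T assume T: "T \<subseteq> \<Union>C \<and> finite T"
      show "Good (\<Inter>x\<in>T. Collect x)"
      proof (cases "T = {}")
        case True then show ?thesis by (simp add: Good_UNIV)
      next
        case False
        then have "C \<noteq> {}" using T by auto
        moreover have "subset.chain UNIV C" using C by (simp add: chains_def chain_subset_alt_def)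
        ultimately obtain B where "B \<in> C" "T \<subseteq> B"
          using T finite_subset_Union_chain[of T C UNIV] by blast
        then show ?thesis using C T by (auto simp: chains_def linked_def)
      qed
    qed
    then show "\<exists>U\<in>{X. linked S X}. \<forall>X\<in>C. X \<subseteq> U" by auto
  qed
  from Zorn_Lemma2[OF this] show ?thesis by auto
qed

lemma sierp_null_bound:
  assumes gS: "generalized_Sierpinski_set S"
    and lk: "linked S X" and mx: "\<forall>Y. linked S Y \<and> X \<subseteq> Y \<longrightarrow> Y = X"
  shows "\<not> (\<exists>H. measure_zero_cantor H \<and> X \<subseteq> H)"
proof
  assume "\<exists>H. measure_zero_cantor H \<and> X \<subseteq> H"
  then obtain H where H: "measure_zero_cantor H" "X \<subseteq> H" by auto
  have unc: "uncountable S" and reg: "regularCard (card_of S)"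
    and sp: "\<And>H. measure_zero_cantor H \<Longrightarrow> |S \<inter> H| <o |S|"
    using gS unfolding generalized_Sierpinski_set_def by auto
  have infS: "\<not> finite S" using unc using countable_finite by blast
  have st: "stable (card_of S)"
    using regularCard_stable[OF card_of_Card_order _ reg] infS by (simp only: Field_card_of) blast
  have XS: "X \<subseteq> S" using lk by (simp add: linked_def)
  have Xless: "|X| <o |S|"
    using sp[OF H(1)] card_of_mono1[of X "S \<inter> H"] H(2) XS ordLeq_ordLess_trans by blast
  have natless: "|UNIV :: nat set| <o |S|"
  proof -
    have "\<not> |S| \<le>o |UNIV :: nat set|" using unc countable_card_of_nat by blast
    then show ?thesis using not_ordLeq_iff_ordLess[OF card_of_Well_order card_of_Well_order] by blast
  qed
  have finless: "finite A \<Longrightarrow> |A| <o |S|" for A :: "(nat \<Rightarrow> bool) set set"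
    using finite_ordLess_infinite[OF card_of_Well_order card_of_Well_order, of A S] infS
    unfolding Field_card_of by blast
  define Fp where "Fp n = {T. T \<subseteq> X \<and> finite T \<and> card T \<le> n}" for n
  have Fpless: "|Fp n| <o |S|" for n
  proof (induction n)
    case 0
    have "Fp 0 = {{}}" unfolding Fp_def by auto
    then show ?case using finless by simp
  next
    case (Suc n)
    have sub: "Fp (Suc n) \<subseteq> Fp n \<union> (\<lambda>(T,x). insert x T) ` (Fp n \<times> X)"
    proof
      fix T assume T: "T \<in> Fp (Suc n)"
      show "T \<in> Fp n \<union> (\<lambda>(T,x). insert x T) ` (Fp n \<times> X)"
      proof (cases "card T \<le> n")
        case True then show ?thesis using T by (auto simp: Fp_def)
      next
        case False
        then have "T \<noteq> {}" by auto
        then obtain x where x: "x \<in> T" by auto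
        have "T - {x} \<in> Fp n" using T x False by (auto simp: Fp_def)
        moreover have "x \<in> X" using T x by (auto simp: Fp_def)
        moreover have "T = insert x (T - {x})" using x by auto
        ultimately have "T \<in> (\<lambda>(T,x). insert x T) ` (Fp n \<times> X)"
          by (intro image_eqI[of _ _ "(T - {x}, x)"]) auto
        then show ?thesis by blast
      qed
    qed
    have "|Fp n \<times> X| <o |S|"
      using stable_elim[OF st Suc.IH, of "\<lambda>_. X"] Xless by simp
    then have "|(\<lambda>(T,x). insert x T) ` (Fp n \<times> X)| <o |S|"
      using card_of_image ordLeq_ordLess_trans by blast
    then have "|Fp n \<union> (\<lambda>(T,x). insert x T) ` (Fp n \<times> X)| <o |S|"
      using card_of_Un_ordLess_infinite[OF infS Suc.IH] by blast
    then show ?case using card_of_mono1[OF sub] ordLeq_ordLess_trans by blast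
  qed
  define Fpw where "Fpw = {T. T \<subseteq> X \<and> finite T}"
  have "Fpw = (\<Union>n. Fp n)"
  proof (intro set_eqI iffI)
    fix T assume "T \<in> Fpw"
    then have "T \<in> Fp (card T)" unfolding Fpw_def Fp_def by auto
    then show "T \<in> (\<Union>n. Fp n)" by blast
  qed (auto simp: Fpw_def Fp_def)
  then have Fpwless: "|Fpw| <o |S|"
    using stable_UNION[OF st natless, of Fp] Fpless by simp
  define NT where "NT T = {x. \<not> Good ((\<Inter>t\<in>T. Collect t) \<inter> Collect x)}" for T
  have NTnull: "measure_zero_cantor (NT T)" if "T \<in> Fpw" for T
  proof -
    have "Good (\<Inter>t\<in>T. Collect t)" using lk that by (auto simp: linked_def Fpw_def)
    then have "AE x in P. Good ((\<Inter>t\<in>T. Collect t) \<inter> Collect x)" by (rule good_step)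
    then obtain N where N: "{x \<in> space P. \<not> Good ((\<Inter>t\<in>T. Collect t) \<inter> Collect x)} \<subseteq> N" "N \<in> null_sets P"
      by (auto elim!: AE_E simp: null_sets_def)
    then show ?thesis unfolding measure_zero_cantor_def null_sets_completion_iff2 NT_def by auto
  qed
  define Bad where "Bad = X \<union> (\<Union>T\<in>Fpw. S \<inter> NT T)"
  have "|\<Union>T\<in>Fpw. S \<inter> NT T| <o |S|"
    by (rule stable_UNION[OF st Fpwless]) (rule sp[OF NTnull])
  then have "|Bad| <o |S|" unfolding Bad_def by (rule card_of_Un_ordLess_infinite[OF infS Xless])
  have "\<not> S \<subseteq> Bad"
  proof
    assume "S \<subseteq> Bad"
    then have "|S| \<le>o |Bad|" by (rule card_of_mono1)
    then have "|S| <o |S|" using \<open>|Bad| <o |S|\<close> by (rule ordLeq_ordLess_trans)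
    then show False using ordLess_irreflexive by blast
  qed
  then obtain s where s: "s \<in> S" "s \<notin> Bad" by auto
  have "linked S (insert s X)"
    unfolding linked_def
  proof (intro conjI allI impI)
    show "insert s X \<subseteq> S" using s XS by auto
    fix T assume T: "T \<subseteq> insert s X \<and> finite T"
    show "Good (\<Inter>x\<in>T. Collect x)"
    proof (cases "s \<in> T")
      case False
      then have "T \<subseteq> X" using T by auto
      then show ?thesis using lk T by (auto simp: linked_def)
    next
      case True
      have "T - {s} \<in> Fpw" using T by (auto simp: Fpw_def)
      then have "s \<notin> NT (T - {s})" using s unfolding Bad_def by auto
      then have "Good ((\<Inter>t\<in>T - {s}. Collect t) \<inter> Collect s)" by (simp add: NT_def)
      moreover have "(\<Inter>t\<in>T - {s}. Collect t) \<inter> Collect s = (\<Inter>x\<in>T. Collect x)" using True by auto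
      ultimately show ?thesis by simp
    qed
  qed
  moreover have "s \<notin> X" using s unfolding Bad_def by auto
  ultimately show False using mx by blast
qed



lemma finite_eventually_disjoint:
  assumes "finite E" shows "eventually (\<lambda>n. E \<inter> Iv n = {}) sequentially"
proof -
  have "\<forall>n\<ge>Max (insert 0 E). E \<inter> Iv n = {}"
  proof (intro allI impI)
    fix n assume n: "Max (insert 0 E) \<le> n"
    { fix i assume "i \<in> E" "i \<in> Iv n"
      then have "i \<le> Max (insert 0 E)" using assms by simp
      moreover have "n < i" using Iv_ge \<open>i \<in> Iv n\<close> by blast
      ultimately have False using n by simp }
    then show "E \<inter> Iv n = {}" by blast
  qed
  then show ?thesis unfolding eventually_sequentially by blast
qed

lemma main_construction:
  fixes X :: "(nat \<Rightarrow> bool) set"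
  assumes lk: "\<And>T. T \<subseteq> X \<Longrightarrow> finite T \<Longrightarrow> Good (\<Inter>x\<in>T. Collect x)"
    and nn: "\<And>H. measure_zero_cantor H \<Longrightarrow> \<not> X \<subseteq> H"
  shows "\<exists>F. filter_on_nat F \<and> \<not> principal_filter_on_nat F \<and>
           meager_in cantor_top (char_set F) \<and>
           \<not> lebesgue_measurable_cantor (char_set F)"
proof -
  define F where "F = {Y. \<exists>T E. T \<subseteq> X \<and> finite T \<and> finite E \<and> (\<Inter>x\<in>T. Collect x) - E \<subseteq> Y}"
  have ev: "eventually (\<lambda>n. Y \<inter> Iv n \<noteq> {}) sequentially" if "Y \<in> F" for Y
  proof -
    from that obtain T E where TE: "T \<subseteq> X" "finite T" "finite E" "(\<Inter>x\<in>T. Collect x) - E \<subseteq> Y"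
      unfolding F_def by blast
    have "eventually (\<lambda>n. (\<Inter>x\<in>T. Collect x) \<inter> Iv n \<noteq> {}) sequentially"
      by (rule Good_eventually[OF lk[OF TE(1,2)]])
    moreover have "eventually (\<lambda>n. E \<inter> Iv n = {}) sequentially"
      by (rule finite_eventually_disjoint[OF TE(3)])
    ultimately show ?thesis
    proof eventually_elim
      case (elim n)
      then obtain i where i: "i \<in> (\<Inter>x\<in>T. Collect x)" "i \<in> Iv n" by blast
      then have "i \<notin> E" using elim(2) by blast
      then have "i \<in> Y" using i(1) TE(4) by blast
      then show ?case using i(2) by blast
    qed
  qed
  have emp: "{} \<notin> F"
  proof
    assume "{} \<in> F"
    from ev[OF this] show False by simp
  qed
  have filt: "filter_on_nat F"
    unfolding filter_on_nat_def
  proof (intro conjI allI impI)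
    show "UNIV \<in> F" unfolding F_def by (intro CollectI exI[of _ "{}"]) auto
    show "{} \<notin> F" by (rule emp)
    fix A B assume "A \<in> F"
    then obtain T E where TE: "T \<subseteq> X" "finite T" "finite E" "(\<Inter>x\<in>T. Collect x) - E \<subseteq> A"
      unfolding F_def by blast
    { assume "A \<subseteq> B"
      then have "(\<Inter>x\<in>T. Collect x) - E \<subseteq> B" using TE(4) by (rule subset_trans[rotated])
      then show "B \<in> F" unfolding F_def using TE(1-3) by (intro CollectI exI[of _ T] exI[of _ E] conjI) }
    { assume "B \<in> F"
      then obtain T' E' where TE': "T' \<subseteq> X" "finite T'" "finite E'" "(\<Inter>x\<in>T'. Collect x) - E' \<subseteq> B"
        unfolding F_def by blast
      have "(\<Inter>x\<in>T \<union> T'. Collect x) - (E \<union> E') \<subseteq> A \<inter> B" using TE(4) TE'(4) by auto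
      moreover have "T \<union> T' \<subseteq> X" "finite (T \<union> T')" "finite (E \<union> E')" using TE TE' by auto
      ultimately show "A \<inter> B \<in> F" unfolding F_def
        by (intro CollectI exI[of _ "T \<union> T'"] exI[of _ "E \<union> E'"] conjI) }
  qed
  have up: "\<And>A B. A \<in> F \<Longrightarrow> A \<subseteq> B \<Longrightarrow> B \<in> F"
    and int: "\<And>A B. A \<in> F \<Longrightarrow> B \<in> F \<Longrightarrow> A \<inter> B \<in> F"
    using filt unfolding filter_on_nat_def by blast+
  have cof: "UNIV - E \<in> F" if "finite E" for E
    unfolding F_def using that by (intro CollectI exI[of _ "{}"] exI[of _ E]) auto
  have nonprinc: "\<not> principal_filter_on_nat F"
  proof
    assume "principal_filter_on_nat F"
    then obtain A where A: "F = {B. A \<subseteq> B}" unfolding principal_filter_on_nat_def by blast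
    have "A \<subseteq> UNIV - {i}" for i using cof[of "{i}"] A by auto
    then have "A = {}" by blast
    then have "{} \<in> F" using A by auto
    then show False using emp by simp
  qed
  have meager: "meager_in cantor_top (char_set F)"
  proof (rule meager_sub)
    fix z assume "z \<in> char_set F"
    then obtain Y where Y: "Y \<in> F" "z = (\<lambda>n. n \<in> Y)" unfolding char_set_def by blast
    from ev[OF Y(1)] show "eventually (\<lambda>n. \<exists>i\<in>Iv n. z i) sequentially"
      by eventually_elim (use Y(2) in auto)
  qed
  have XF: "X \<subseteq> char_set F"
  proof
    fix x assume "x \<in> X"
    then have "Collect x \<in> F" unfolding F_def by (intro CollectI exI[of _ "{x}"] exI[of _ "{}"]) auto
    moreover have "x = (\<lambda>n. n \<in> Collect x)" by simp
    ultimately show "x \<in> char_set F" unfolding char_set_def by blast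
  qed
  have nonmeas: "\<not> lebesgue_measurable_cantor (char_set F)"
  proof
    assume "lebesgue_measurable_cantor (char_set F)"
    then have A: "char_set F \<in> sets (completion P)" by (simp add: lebesgue_measurable_cantor_def)
    have "char_set F \<in> null_sets (completion P)"
    proof (rule null_invariant[OF A])
      fix x and E :: "nat set" assume E: "finite E" and x: "x \<in> char_set F"
      then obtain Y where Y: "Y \<in> F" "x = (\<lambda>n. n \<in> Y)" unfolding char_set_def by blast
      have "Y \<inter> (UNIV - E) \<in> F" by (rule int[OF Y(1) cof[OF E]])
      moreover have "Y \<inter> (UNIV - E) \<subseteq> (Y - E) \<union> (E - Y)" by blast
      ultimately have "(Y - E) \<union> (E - Y) \<in> F" by (rule up)
      moreover have "flipE E x = (\<lambda>n. n \<in> (Y - E) \<union> (E - Y))"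
        using Y(2) by (auto simp: flipE_def fun_eq_iff)
      ultimately show "flipE E x \<in> char_set F" unfolding char_set_def by blast
    next
      fix x assume x: "x \<in> char_set F"
      then obtain Y where Y: "Y \<in> F" "x = (\<lambda>n. n \<in> Y)" unfolding char_set_def by blast
      show "neg x \<notin> char_set F"
      proof
        assume "neg x \<in> char_set F"
        then obtain Y' where Y': "Y' \<in> F" "neg x = (\<lambda>n. n \<in> Y')" unfolding char_set_def by blast
        have "Y' = UNIV - Y" using Y(2) Y'(2) by (auto simp: neg_def fun_eq_iff)
        then have "Y \<inter> Y' = {}" by blast
        moreover have "Y \<inter> Y' \<in> F" by (rule int[OF Y(1) Y'(1)])
        ultimately show False using emp by simp
      qed
    qed
    then have "measure_zero_cantor (char_set F)" by (simp add: measure_zero_cantor_def)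
    then show False using nn XF by blast
  qed
  show ?thesis using filt nonprinc meager nonmeas by blast
qed

theorem theorem2p2:
  assumes "\<exists>S. generalized_Sierpinski_set S"
  shows "\<exists>F. filter_on_nat F \<and> \<not> principal_filter_on_nat F \<and>
           meager_in cantor_top (char_set F) \<and>
           \<not> lebesgue_measurable_cantor (char_set F)"
proof -
  obtain S where gS: "generalized_Sierpinski_set S" using assms by blast
  obtain X where lk: "linked S X" and mx: "\<forall>Y. linked S Y \<and> X \<subseteq> Y \<longrightarrow> Y = X"
    using exists_maximal_linked by blast
  have nn: "\<not> (\<exists>H. measure_zero_cantor H \<and> X \<subseteq> H)" by (rule sierp_null_bound[OF gS lk mx])
  show ?thesis
  proof (rule main_construction)
    show "\<And>T. T \<subseteq> X \<Longrightarrow> finite T \<Longrightarrow> Good (\<Inter>x\<in>T. Collect x)" using lk by (auto simp: linked_def)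
    show "\<And>H. measure_zero_cantor H \<Longrightarrow> \<not> X \<subseteq> H" using nn by blast
  qed
qed


end
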